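(* A vector configuration $V$ satisfies $\mathrm{DD}(V)=0$ if and only if it is centrally symmetric up to rescaling, i.e. its nonzero elements can be partitioned into pairs of the form $\{v,-\lambda v\}$ with $\lambda>0$.
   Context: A vector configuration is a finite family (repetitions allowed) $V$ of vectors in $\mathbb{R}^r$; cardinalities count multiplicities. Covector discrepancy: $\mathrm{DD}(V)=\max_f\big|\,|\{v\in V: f(v)>0\}|-|\{v\in V:f(v)<0\}|\,\big|$ over all linear functionals $f$ on $\mathbb{R}^r$. Copies of the zero vector are ignored in the notion of central symmetry. *)

theory Defs
  imports "HOL-Analysis.Analysis" "HOL-Library.Multiset"
begin

text \<open>A vector configuration in R^r is a finite multiset of vectors of type real^'n
  (r = CARD('n)). Number of elements on the positive / negative side of a linear functional.\<close>

definition pos_count :: "(real^'n \<Rightarrow> real) \<Rightarrow> (real^'n) multiset \<Rightarrow> nat" where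
  "pos_count f V = size (filter_mset (\<lambda>v. f v > 0) V)"

definition neg_count :: "(real^'n \<Rightarrow> real) \<Rightarrow> (real^'n) multiset \<Rightarrow> nat" where
  "neg_count f V = size (filter_mset (\<lambda>v. f v < 0) V)"

definition DD :: "(real^'n) multiset \<Rightarrow> nat" where
  "DD V = Max {nat \<bar>int (pos_count f V) - int (neg_count f V)\<bar> | f. linear f}"

definition cs_up_to_rescaling :: "(real^'n) multiset \<Rightarrow> bool" where
  "cs_up_to_rescaling V \<longleftrightarrow>
     (\<exists>P :: ((real^'n) \<times> (real^'n)) multiset.
        (\<forall>p \<in># P. fst p \<noteq> 0 \<and> (\<exists>c>0. snd p = - (c *\<^sub>R fst p))) \<and>
        filter_mset (\<lambda>v. v \<noteq> 0) V = image_mset fst P + image_mset snd P)"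

end

theory Submission
  imports Defs
begin

definition bal :: "(real^'n) multiset \<Rightarrow> bool" where
  "bal V \<longleftrightarrow> (\<forall>f. linear f \<longrightarrow> pos_count f V = neg_count f V)"

lemma linear_inner_r: "linear (\<lambda>x. inner (a::real^'n) x)"
  using bounded_linear_inner_right bounded_linear.linear by blast

lemma size_filter_img: "size (filter_mset P (image_mset g M)) = size (filter_mset (\<lambda>x. P (g x)) M)"
  by (induction M) auto

lemma count_split:
  assumes "\<And>x. x \<in># M \<Longrightarrow> Q x \<Longrightarrow> (P x \<longleftrightarrow> R1 x)"
    and "\<And>x. x \<in># M \<Longrightarrow> \<not> Q x \<Longrightarrow> (P x \<longleftrightarrow> R2 x)"
  shows "size (filter_mset P M) = size (filter_mset (\<lambda>x. Q x \<and> R1 x) M) + size (filter_mset (\<lambda>x. \<not> Q x \<and> R2 x) M)"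
proof -
  have "filter_mset P M = filter_mset (\<lambda>x. Q x \<and> P x) M + filter_mset (\<lambda>x. \<not> Q x \<and> P x) M"
    by (induction M) auto
  moreover have "filter_mset (\<lambda>x. Q x \<and> P x) M = filter_mset (\<lambda>x. Q x \<and> R1 x) M"
    by (rule filter_mset_cong0) (use assms in blast)
  moreover have "filter_mset (\<lambda>x. \<not> Q x \<and> P x) M = filter_mset (\<lambda>x. \<not> Q x \<and> R2 x) M"
    by (rule filter_mset_cong0) (use assms in blast)
  ultimately show ?thesis by simp
qed

lemma DD_iff: "DD V = 0 \<longleftrightarrow> bal V"
proof -
  define S where "S = {nat \<bar>int (pos_count f V) - int (neg_count f V)\<bar> | f. linear f}"
  have fin: "finite S"
  proof (rule finite_subset)
    show "S \<subseteq> {..size V}"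
    proof
      fix x assume "x \<in> S"
      then obtain f where x: "x = nat \<bar>int (pos_count f V) - int (neg_count f V)\<bar>" unfolding S_def by blast
      have "pos_count f V \<le> size V" "neg_count f V \<le> size V"
        unfolding pos_count_def neg_count_def by (auto intro: size_filter_mset_lesseq)
      then show "x \<in> {..size V}" using x by auto
    qed
  qed simp
  have ne: "S \<noteq> {}" unfolding S_def using linear_zero by blast
  have "DD V = 0 \<longleftrightarrow> Max S \<le> 0" unfolding DD_def S_def by simp
  also have "\<dots> \<longleftrightarrow> (\<forall>x\<in>S. x \<le> 0)" using Max_le_iff[OF fin ne] by blast
  also have "\<dots> \<longleftrightarrow> bal V" unfolding S_def bal_def by auto
  finally show ?thesis .
qed

lemma cs_bal: fixes V :: "(real^'n) multiset" assumes "cs_up_to_rescaling V" shows "bal V"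
  unfolding bal_def
proof (intro allI impI)
  fix f :: "real^'n \<Rightarrow> real" assume lin: "linear f"
  obtain P :: "((real^'n) \<times> (real^'n)) multiset" where P: "\<forall>p \<in># P. fst p \<noteq> 0 \<and> (\<exists>c>0. snd p = - (c *\<^sub>R fst p))"
    and eq: "filter_mset (\<lambda>v. v \<noteq> 0) V = image_mset fst P + image_mset snd P"
    using assms unfolding cs_up_to_rescaling_def by blast
  have f0: "f 0 = 0" using lin linear_0 by blast
  have sgn: "\<And>p. p \<in># P \<Longrightarrow> (f (snd p) > 0 \<longleftrightarrow> f (fst p) < 0) \<and> (f (snd p) < 0 \<longleftrightarrow> f (fst p) > 0)"
  proof -
    fix p assume "p \<in># P"
    then obtain c where c: "c > 0" "snd p = - (c *\<^sub>R fst p)" using P by blast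
    then have "f (snd p) = - (c * f (fst p))" using lin by (simp add: linear_neg linear_cmul)
    then show "?thesis p" using c(1) by (auto simp: mult_pos_pos mult_neg_pos zero_less_mult_iff mult_less_0_iff)
  qed
  have A: "\<And>Q. (\<And>x. Q x \<Longrightarrow> x \<noteq> 0) \<Longrightarrow> size (filter_mset Q V) =
      size (filter_mset (\<lambda>p. Q (fst p)) P) + size (filter_mset (\<lambda>p. Q (snd p)) P)"
  proof -
    fix Q :: "real^'n \<Rightarrow> bool" assume h: "\<And>x. Q x \<Longrightarrow> x \<noteq> 0"
    have "filter_mset Q V = filter_mset Q (filter_mset (\<lambda>v. v \<noteq> 0) V)"
      unfolding filter_filter_mset by (rule filter_mset_cong0) (use h in blast)
    then show "?thesis Q" by (simp add: eq size_filter_img)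
  qed
  have "pos_count f V = size (filter_mset (\<lambda>p. f (fst p) > 0) P) + size (filter_mset (\<lambda>p. f (snd p) > 0) P)"
    unfolding pos_count_def by (rule A) (use f0 in auto)
  also have "\<dots> = size (filter_mset (\<lambda>p. f (snd p) < 0) P) + size (filter_mset (\<lambda>p. f (fst p) < 0) P)"
    using sgn by (metis (no_types, lifting) filter_mset_cong0)
  also have "\<dots> = neg_count f V"
    unfolding neg_count_def by (subst A) (use f0 in auto)
  finally show "pos_count f V = neg_count f V" .
qed

lemma ortho_sep:
  fixes u v :: "real^'n"
  assumes "u \<notin> range (\<lambda>t. t *\<^sub>R v)"
  shows "\<exists>p. p \<bullet> v = 0 \<and> p \<bullet> u \<noteq> 0"
proof (cases "v = 0")
  case True
  then have "u \<noteq> 0" using assms by auto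
  then show ?thesis using True by (intro exI[of _ u]) auto
next
  case False
  define k where "k = (u \<bullet> v) / (v \<bullet> v)"
  define p where "p = u - k *\<^sub>R v"
  have vv: "v \<bullet> v \<noteq> 0" using False by simp
  have pv: "p \<bullet> v = 0" unfolding p_def k_def using vv by (simp add: inner_diff_left)
  have "p \<noteq> 0" using assms unfolding p_def by auto
  moreover have "p \<bullet> u = p \<bullet> p"
  proof -
    have "u = p + k *\<^sub>R v" unfolding p_def by simp
    then have "p \<bullet> u = p \<bullet> p + k * (p \<bullet> v)" by (metis inner_add_right inner_scaleR_right)
    then show ?thesis using pv by simp
  qed
  ultimately show ?thesis using pv by (intro exI[of _ p]) auto
qed

lemma avoid:
  fixes v :: "real^'n"
  assumes "finite U" "\<forall>u\<in>U. u \<notin> range (\<lambda>t. t *\<^sub>R v)"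
  shows "\<exists>a. a \<bullet> v = 0 \<and> (\<forall>u\<in>U. a \<bullet> u \<noteq> 0)"
  using assms
proof (induction U rule: finite_induct)
  case empty
  then show ?case by (intro exI[of _ 0]) auto
next
  case (insert u U)
  then obtain a where a: "a \<bullet> v = 0" "\<forall>w\<in>U. a \<bullet> w \<noteq> 0" by auto
  obtain p where p: "p \<bullet> v = 0" "p \<bullet> u \<noteq> 0" using ortho_sep insert.prems by blast
  define B where "B = (\<lambda>w. - (a \<bullet> w) / (p \<bullet> w)) ` (insert u U)"
  have "finite B" unfolding B_def using insert.hyps by simp
  then obtain t :: real where t: "t \<notin> B"
    by (meson ex_new_if_finite infinite_UNIV_char_0 subset_UNIV UNIV_I)
  show ?case
  proof (intro exI[of _ "a + t *\<^sub>R p"] conjI ballI)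
    show "(a + t *\<^sub>R p) \<bullet> v = 0" using a p by (simp add: inner_add_left)
  next
    fix w assume w: "w \<in> insert u U"
    show "(a + t *\<^sub>R p) \<bullet> w \<noteq> 0"
    proof (cases "p \<bullet> w = 0")
      case True
      then have "w \<in> U" using w p by auto
      then show ?thesis using a True by (simp add: inner_add_left)
    next
      case False
      have "t \<noteq> - (a \<bullet> w) / (p \<bullet> w)" using t w unfolding B_def by auto
      then have "a \<bullet> w + t * (p \<bullet> w) \<noteq> 0" using False by (auto simp: field_simps)
      then show ?thesis by (simp add: inner_add_left)
    qed
  qed
qed

lemma key:
  fixes V :: "(real^'n) multiset"
  assumes bal: "bal V" and vV: "v \<in># V" and v0: "v \<noteq> 0"
  shows "\<exists>c>0. - (c *\<^sub>R v) \<in># V"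
proof -
  define U where "U = {u \<in> set_mset V. u \<notin> range (\<lambda>t. t *\<^sub>R v)}"
  have finU: "finite U" unfolding U_def by simp
  obtain a where a: "a \<bullet> v = 0" "\<forall>u\<in>U. a \<bullet> u \<noteq> 0" using avoid[OF finU] unfolding U_def by blast
  define E where "E = (\<lambda>u. \<bar>a \<bullet> u\<bar> / (\<bar>v \<bullet> u\<bar> + 1)) ` U"
  define e where "e = Min (insert 1 E)"
  have finE: "finite (insert 1 E)" unfolding E_def using finU by simp
  have epos: "e > 0" unfolding e_def using Min_gr_iff[OF finE] a(2) unfolding E_def
    by (auto simp: add_pos_nonneg)
  have small: "e * \<bar>v \<bullet> u\<bar> < \<bar>a \<bullet> u\<bar>" if "u \<in> U" for u
  proof -
    have "e \<le> \<bar>a \<bullet> u\<bar> / (\<bar>v \<bullet> u\<bar> + 1)" unfolding e_def using finE that E_def by auto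
    then have "e * (\<bar>v \<bullet> u\<bar> + 1) \<le> \<bar>a \<bullet> u\<bar>"
      by (simp add: pos_le_divide_eq add_pos_nonneg)
    then show ?thesis using epos by (simp add: algebra_simps)
  qed
  define fp where "fp = (\<lambda>x. (a + e *\<^sub>R v) \<bullet> x)"
  define fm where "fm = (\<lambda>x. (a - e *\<^sub>R v) \<bullet> x)"
  have lin: "linear fp" "linear fm" unfolding fp_def fm_def by (rule linear_inner_r)+
  have inU: "(fp u > 0 \<longleftrightarrow> a \<bullet> u > 0) \<and> (fp u < 0 \<longleftrightarrow> a \<bullet> u < 0) \<and>
     (fm u > 0 \<longleftrightarrow> a \<bullet> u > 0) \<and> (fm u < 0 \<longleftrightarrow> a \<bullet> u < 0)" if "u \<in> U" for u
  proof -
    have s: "e * \<bar>v \<bullet> u\<bar> < \<bar>a \<bullet> u\<bar>" using small that .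
    have "\<bar>e * (v \<bullet> u)\<bar> = e * \<bar>v \<bullet> u\<bar>" using epos by (simp add: abs_mult)
    moreover have "fp u = a \<bullet> u + e * (v \<bullet> u)" "fm u = a \<bullet> u - e * (v \<bullet> u)"
      unfolding fp_def fm_def by (simp_all add: inner_add_left inner_diff_left)
    ultimately show ?thesis using s by (auto simp: abs_if split: if_splits)
  qed
  have notU: "fp u = e * (v \<bullet> u) \<and> fm u = - (e * (v \<bullet> u))" if hu: "u \<in># V" "u \<notin> U" for u
  proof -
    obtain t where "u = t *\<^sub>R v" using hu unfolding U_def by auto
    then have "a \<bullet> u = 0" using a by simp
    then show ?thesis unfolding fp_def fm_def by (simp add: inner_add_left inner_diff_left)
  qed
  have ss: "\<And>x::real. (e * x > 0 \<longleftrightarrow> x > 0) \<and> (e * x < 0 \<longleftrightarrow> x < 0)"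
    using epos by (simp add: zero_less_mult_iff mult_less_0_iff)
  define A1 where "A1 = size (filter_mset (\<lambda>u. u \<in> U \<and> a \<bullet> u > 0) V)"
  define A2 where "A2 = size (filter_mset (\<lambda>u. u \<in> U \<and> a \<bullet> u < 0) V)"
  define P where "P = size (filter_mset (\<lambda>u. u \<notin> U \<and> v \<bullet> u > 0) V)"
  define N where "N = size (filter_mset (\<lambda>u. u \<notin> U \<and> v \<bullet> u < 0) V)"
  have "pos_count fp V = A1 + P" unfolding pos_count_def A1_def P_def
    by (rule count_split) (use inU notU ss in auto)
  moreover have "neg_count fp V = A2 + N" unfolding neg_count_def A2_def N_def
    by (rule count_split) (use inU notU ss in auto)
  moreover have "pos_count fm V = A1 + N" unfolding pos_count_def A1_def N_def
    by (rule count_split) (use inU notU ss in auto)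
  moreover have "neg_count fm V = A2 + P" unfolding neg_count_def A2_def P_def
    by (rule count_split) (use inU notU ss in auto)
  moreover have "pos_count fp V = neg_count fp V" "pos_count fm V = neg_count fm V"
    using bal lin unfolding bal_def by blast+
  ultimately have "P = N" by linarith
  moreover have "v \<notin> U" unfolding U_def by (auto intro: range_eqI[of _ _ 1])
  then have "v \<in># filter_mset (\<lambda>u. u \<notin> U \<and> v \<bullet> u > 0) V" using vV v0 by simp
  then have "P > 0" unfolding P_def by (metis gr0I multiset_nonemptyE size_eq_0_iff_empty emptyE empty_iff set_mset_empty)
  ultimately have "N > 0" by simp
  then obtain u where u: "u \<in># filter_mset (\<lambda>u. u \<notin> U \<and> v \<bullet> u < 0) V"
    unfolding N_def by (metis multiset_nonemptyE size_empty less_irrefl)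
  then have uV: "u \<in># V" "u \<notin> U" "v \<bullet> u < 0" by auto
  then obtain t where t: "u = t *\<^sub>R v" unfolding U_def by auto
  then have "t * (v \<bullet> v) < 0" using uV by simp
  then have "t < 0" using v0 inner_ge_zero[of v] by (auto simp: mult_less_0_iff)
  then show ?thesis using uV t by (intro exI[of _ "- t"]) auto
qed

lemma bal_cs:
  fixes V :: "(real^'n) multiset"
  shows "bal V \<Longrightarrow> cs_up_to_rescaling V"
proof (induction "size V" arbitrary: V rule: less_induct)
  case less
  show ?case
  proof (cases "\<exists>v. v \<in># V \<and> v \<noteq> 0")
    case False
    then have "filter_mset (\<lambda>v. v \<noteq> 0) V = {#}" by (auto simp: filter_mset_eq_mempty_iff)
    then show ?thesis unfolding cs_up_to_rescaling_def by (intro exI[of _ "{#}"]) simp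
  next
    case True
    then obtain v where vV: "v \<in># V" and v0: "v \<noteq> 0" by blast
    obtain c where c: "c > 0" and wV: "- (c *\<^sub>R v) \<in># V" using key[OF less.prems vV v0] by blast
    define w where "w = - (c *\<^sub>R v)"
    have w0: "w \<noteq> 0" using c v0 unfolding w_def by simp
    have wv: "w \<noteq> v"
    proof
      assume "w = v"
      then have "v + c *\<^sub>R v = 0" unfolding w_def by (metis add.commute neg_eq_iff_add_eq_0)
      then have "(1 + c) *\<^sub>R v = 0" by (simp add: scaleR_left_distrib)
      then show False using c v0 by simp
    qed
    define V' where "V' = V - {#v, w#}"
    have sub: "{#v, w#} \<subseteq># V" using vV wV wv unfolding w_def
      by (simp add: insert_subset_eq_iff in_diff_count)
    have VV: "V = V' + {#v, w#}" unfolding V'_def using sub by (metis subset_mset.diff_add add.commute)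
    have lt: "size V' < size V" using VV by simp
    have "bal V'" unfolding bal_def
    proof (intro allI impI)
      fix f :: "real^'n \<Rightarrow> real" assume lin: "linear f"
      have fw: "f w = - (c * f v)" unfolding w_def using lin by (simp add: linear_neg linear_cmul)
      have pn: "pos_count f {#v, w#} = neg_count f {#v, w#}"
        unfolding pos_count_def neg_count_def using fw c
        by (auto simp: zero_less_mult_iff mult_less_0_iff)
      have "pos_count f V = neg_count f V" using less.prems lin unfolding bal_def by blast
      moreover have "pos_count f V = pos_count f V' + pos_count f {#v, w#}"
        "neg_count f V = neg_count f V' + neg_count f {#v, w#}"
        unfolding pos_count_def neg_count_def by (subst VV, simp only: filter_union_mset size_union)+
      ultimately show "pos_count f V' = neg_count f V'" using pn by simp
    qed
    then obtain P :: "((real^'n) \<times> (real^'n)) multiset" where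
      P: "\<forall>p \<in># P. fst p \<noteq> 0 \<and> (\<exists>c>0. snd p = - (c *\<^sub>R fst p))"
      and eq: "filter_mset (\<lambda>v. v \<noteq> 0) V' = image_mset fst P + image_mset snd P"
      using less.hyps[OF lt] unfolding cs_up_to_rescaling_def by blast
    show ?thesis unfolding cs_up_to_rescaling_def
    proof (intro exI[of _ "add_mset (v, w) P"] conjI)
      show "\<forall>p \<in># add_mset (v, w) P. fst p \<noteq> 0 \<and> (\<exists>c>0. snd p = - (c *\<^sub>R fst p))"
        using P v0 c unfolding w_def by auto
      show "filter_mset (\<lambda>v. v \<noteq> 0) V = image_mset fst (add_mset (v, w) P) + image_mset snd (add_mset (v, w) P)"
        unfolding VV using eq v0 w0 by simp
    qed
  qed
qed

theorem mainTheorem9: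
  fixes V :: "(real^'n) multiset"
  shows "DD V = 0 \<longleftrightarrow> cs_up_to_rescaling V"
  using DD_iff bal_cs cs_bal by blast

end
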